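(* For all integers $1\le k\le n$, $S(n,n-k+1,k)=\binom{n}{k-1}$.
   Context: A $k$-CNF formula is a conjunction of clauses (disjunctions of literals) each of width at most $k$. $\mathrm{sat}_t(F)$ is the set of satisfying assignments of $F$ of Hamming weight exactly $t$. $F$ is $t$-admissible if it has no satisfying assignment of Hamming weight less than $t$. $S(n,t,k)$ is the maximum of $|\mathrm{sat}_t(F)|$ over all $t$-admissible $k$-CNF formulas $F$ on $n$ variables. *)

theory Defs
  imports Main
begin

text \<open>Variables are the numbers 0..n-1. A literal is a pair (v, b): the positive
literal x_v if b = True, the negative literal (not x_v) if b = False. An assignment is identified with the set of variables set to true;
its Hamming weight is the cardinality of that set.\<close>

type_synonym literal = "nat \<times> bool"
type_synonym clause = "literal set"
type_synonym cnf = "clause set"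

definition is_kcnf :: "nat \<Rightarrow> nat \<Rightarrow> cnf \<Rightarrow> bool" where
  "is_kcnf n k F \<longleftrightarrow> finite F \<and>
     (\<forall>C\<in>F. finite C \<and> card C \<le> k \<and> (\<forall>(v, b)\<in>C. v < n))"

definition sat_clause :: "nat set \<Rightarrow> clause \<Rightarrow> bool" where
  "sat_clause A C \<longleftrightarrow> (\<exists>(v, b)\<in>C. (v \<in> A) = b)"

definition sat_cnf :: "nat set \<Rightarrow> cnf \<Rightarrow> bool" where
  "sat_cnf A F \<longleftrightarrow> (\<forall>C\<in>F. sat_clause A C)"

definition sat_t :: "nat \<Rightarrow> nat \<Rightarrow> cnf \<Rightarrow> nat set set" where
  "sat_t n t F = {A. A \<subseteq> {..<n} \<and> card A = t \<and> sat_cnf A F}"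

definition admissible :: "nat \<Rightarrow> nat \<Rightarrow> cnf \<Rightarrow> bool" where
  "admissible n t F \<longleftrightarrow> (\<forall>A. A \<subseteq> {..<n} \<and> card A < t \<longrightarrow> \<not> sat_cnf A F)"

definition S :: "nat \<Rightarrow> nat \<Rightarrow> nat \<Rightarrow> nat" where
  "S n t k = Max {card (sat_t n t F) | F. is_kcnf n k F \<and> admissible n t F}"

end

theory Submission
  imports Defs
begin

lemma sat_t_sub: "sat_t n t F \<subseteq> {A. A \<subseteq> {..<n} \<and> card A = t}"
  unfolding sat_t_def by auto

lemma card_sat_t_le: "card (sat_t n t F) \<le> n choose t"
proof -
  have "card (sat_t n t F) \<le> card {A. A \<subseteq> {..<n} \<and> card A = t}"
    by (rule card_mono) (auto simp: sat_t_sub)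
  also have "\<dots> = n choose t" using n_subsets[of "{..<n}" t] by simp
  finally show ?thesis .
qed

theorem lemma3:
  fixes n k :: nat
  assumes "1 \<le> k" and "k \<le> n"
  shows "S n (n - k + 1) k = n choose (k - 1)"
proof -
  define t where "t = n - k + 1"
  have ch: "n choose t = n choose (k - 1)"
  proof -
    have "n - (k - 1) = t" using assms unfolding t_def by simp
    moreover have "k - 1 \<le> n" using assms by simp
    ultimately show ?thesis using binomial_symmetric[of "k - 1" n] by simp
  qed
  define F :: cnf where "F = (\<lambda>V. (\<lambda>v. (v, True)) ` V) ` {V. V \<subseteq> {..<n} \<and> card V = k}"
  have kF: "is_kcnf n k F"
  proof -
    have "finite {V. V \<subseteq> {..<n} \<and> card V = k}" by (rule finite_subset[of _ "Pow {..<n}"]) auto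
    moreover have "card ((\<lambda>v. (v, True)) ` V) = card V" for V :: "nat set"
      by (rule card_image) (auto simp: inj_on_def)
    moreover have "finite V" if "V \<subseteq> {..<n}" for V :: "nat set" using that finite_subset by blast
    ultimately show ?thesis unfolding is_kcnf_def F_def by auto
  qed
  have satiff: "sat_cnf A F \<longleftrightarrow> (\<forall>V. V \<subseteq> {..<n} \<and> card V = k \<longrightarrow> V \<inter> A \<noteq> {})" for A
    unfolding sat_cnf_def F_def sat_clause_def by auto
  have adm: "admissible n t F"
    unfolding admissible_def
  proof (intro allI impI)
    fix A :: "nat set" assume a: "A \<subseteq> {..<n} \<and> card A < t"
    have fA: "finite A" using a finite_subset by blast
    have "card ({..<n} - A) = n - card A" using a fA by (simp add: card_Diff_subset)
    hence "k \<le> card ({..<n} - A)" using a assms unfolding t_def by linarith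
    then obtain V where V: "V \<subseteq> {..<n} - A" "card V = k"
      using obtain_subset_with_card_n by blast
    hence "V \<subseteq> {..<n} \<and> card V = k" "V \<inter> A = {}" by auto
    thus "\<not> sat_cnf A F" using satiff by blast
  qed
  have full: "sat_t n t F = {A. A \<subseteq> {..<n} \<and> card A = t}"
  proof -
    have "sat_cnf A F" if a: "A \<subseteq> {..<n}" "card A = t" for A
    proof -
      have fA: "finite A" using a finite_subset by blast
      have cd: "card ({..<n} - A) = k - 1" using a fA assms unfolding t_def by (simp add: card_Diff_subset)
      show ?thesis unfolding satiff
      proof (intro allI impI)
        fix V assume v: "V \<subseteq> {..<n} \<and> card V = k"
        show "V \<inter> A \<noteq> {}"
        proof
          assume "V \<inter> A = {}"
          hence "V \<subseteq> {..<n} - A" using v by auto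
          hence "card V \<le> k - 1" using cd by (metis card_mono finite_Diff finite_lessThan)
          thus False using v assms by linarith
        qed
      qed
    qed
    thus ?thesis unfolding sat_t_def by auto
  qed
  have cF: "card (sat_t n t F) = n choose t" using full n_subsets[of "{..<n}" t] by simp
  let ?M = "{card (sat_t n t G) | G. is_kcnf n k G \<and> admissible n t G}"
  have "Max ?M = n choose t"
  proof (rule Max_eqI)
    show "finite ?M" by (rule finite_subset[of _ "{..n choose t}"]) (auto simp: card_sat_t_le)
    show "y \<le> n choose t" if "y \<in> ?M" for y using that card_sat_t_le by auto
    show "n choose t \<in> ?M" using kF adm cF by force
  qed
  thus ?thesis unfolding S_def t_def[symmetric] ch .
qed

end
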